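(* Let $\delta_\ell=94/194$. Let $H$ be a $3$-regular graph on $n>4$ nodes every independent set of which has at most $\delta_\ell n$ nodes, and let $G$ be the complement of $H$ (an $(n-4)$-regular graph). Then $$\mathsf{OPT}(G)\le\frac{4\delta_\ell-1}{n-4},$$ where the maximum is over clusterings with any number of clusters.
   Context: For a finite simple undirected graph $G=(V,E)$ with $m=|E|\ge1$ edges, degrees $d_v$, and $a_{u,v}=1$ if $\{u,v\}\in E$ and $0$ otherwise: for $C\subseteq V$, $\mathsf M(C)=\frac{1}{2m}\sum_{u\in C}\sum_{v\in C}\big(a_{u,v}-\frac{d_ud_v}{2m}\big)$ (ordered pairs, including $u=v$). A clustering is a partition $\mathcal S$ of $V$ into nonempty clusters, with $\mathsf M(\mathcal S)=\sum_{C\in\mathcal S}\mathsf M(C)$; $\mathsf{OPT}(G)$ is the maximum of $\mathsf M(\mathcal S)$ over all clusterings. *)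

theory Defs
  imports Complex_Main "HOL-Library.Disjoint_Sets"
begin

definition simple_graph :: "'a set \<Rightarrow> ('a \<Rightarrow> 'a \<Rightarrow> bool) \<Rightarrow> bool" where
  "simple_graph V E \<longleftrightarrow> finite V \<and> (\<forall>u v. E u v \<longrightarrow> u \<in> V \<and> v \<in> V)
     \<and> (\<forall>u v. E u v \<longrightarrow> E v u) \<and> (\<forall>u. \<not> E u u)"

definition degree :: "'a set \<Rightarrow> ('a \<Rightarrow> 'a \<Rightarrow> bool) \<Rightarrow> 'a \<Rightarrow> nat" where
  "degree V E v = card {u \<in> V. E v u}"

definition regular :: "'a set \<Rightarrow> ('a \<Rightarrow> 'a \<Rightarrow> bool) \<Rightarrow> nat \<Rightarrow> bool" where
  "regular V E k \<longleftrightarrow> (\<forall>v \<in> V. degree V E v = k)"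

definition num_edges :: "'a set \<Rightarrow> ('a \<Rightarrow> 'a \<Rightarrow> bool) \<Rightarrow> nat" where
  "num_edges V E = card {{u, v} | u v. u \<in> V \<and> v \<in> V \<and> E u v}"

definition independent_set :: "'a set \<Rightarrow> ('a \<Rightarrow> 'a \<Rightarrow> bool) \<Rightarrow> 'a set \<Rightarrow> bool" where
  "independent_set V E S \<longleftrightarrow> S \<subseteq> V \<and> (\<forall>u \<in> S. \<forall>v \<in> S. \<not> E u v)"

definition complement_graph :: "'a set \<Rightarrow> ('a \<Rightarrow> 'a \<Rightarrow> bool) \<Rightarrow> 'a \<Rightarrow> 'a \<Rightarrow> bool" where
  "complement_graph V E u v \<longleftrightarrow> u \<in> V \<and> v \<in> V \<and> u \<noteq> v \<and> \<not> E u v"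

definition adj :: "('a \<Rightarrow> 'a \<Rightarrow> bool) \<Rightarrow> 'a \<Rightarrow> 'a \<Rightarrow> real" where
  "adj E u v = (if E u v then 1 else 0)"

text \<open>Modularity of a cluster C: sum over ordered pairs (including u = v).\<close>
definition cluster_modularity :: "'a set \<Rightarrow> ('a \<Rightarrow> 'a \<Rightarrow> bool) \<Rightarrow> 'a set \<Rightarrow> real" where
  "cluster_modularity V E C =
     (let m = real (num_edges V E) in
      (1 / (2 * m)) * (\<Sum>u\<in>C. \<Sum>v\<in>C. adj E u v
         - real (degree V E u) * real (degree V E v) / (2 * m)))"

definition modularity :: "'a set \<Rightarrow> ('a \<Rightarrow> 'a \<Rightarrow> bool) \<Rightarrow> 'a set set \<Rightarrow> real" where
  "modularity V E P = (\<Sum>C\<in>P. cluster_modularity V E C)"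

definition OPT :: "'a set \<Rightarrow> ('a \<Rightarrow> 'a \<Rightarrow> bool) \<Rightarrow> real" where
  "OPT V E = Max {modularity V E P | P. partition_on V P}"

end

theory Submission
  imports Defs
begin

definition E2 :: "('a \<Rightarrow> 'a \<Rightarrow> bool) \<Rightarrow> 'a set \<Rightarrow> real" where
  "E2 H C = (\<Sum>u\<in>C. \<Sum>v\<in>C. adj H u v)"

lemma adj_nonneg: "0 \<le> adj H u v" by (simp add: adj_def)

lemma E2_nonneg: "0 \<le> E2 H C"
  unfolding E2_def by (intro sum_nonneg) (simp add: adj_def)

lemma sum_adj_card: "finite A \<Longrightarrow> (\<Sum>v\<in>A. adj H u v) = real (card {v\<in>A. H u v})"
  by (simp add: adj_def sum.If_cases Int_def conj_commute)

lemma indep_exists: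
  assumes sg: "simple_graph V H"
  shows "C \<subseteq> V \<Longrightarrow> \<exists>S\<subseteq>C. independent_set V H S \<and> real (card C) - E2 H C / 2 \<le> real (card S)"
proof (induction C rule: measure_induct_rule[of card])
  case (less C)
  have finV: "finite V" using sg by (simp add: simple_graph_def)
  have finC: "finite C" using less.prems finV finite_subset by blast
  show ?case
  proof (cases "\<forall>u\<in>C. \<forall>v\<in>C. \<not> H u v")
    case True
    then have "independent_set V H C" using less.prems by (simp add: independent_set_def)
    moreover have "E2 H C \<ge> 0" by (rule E2_nonneg)
    ultimately show ?thesis by (intro exI[of _ C]) auto
  next
    case False
    then obtain u v where u: "u \<in> C" and v: "v \<in> C" and huv: "H u v" by blast
    have uv: "u \<noteq> v" using huv sg by (auto simp: simple_graph_def)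
    have hvu: "H v u" using huv sg by (auto simp: simple_graph_def)
    define C' where "C' = C - {u}"
    have cardC': "card C' = card C - 1" using u finC by (simp add: C'_def)
    have cpos: "card C > 0" using u finC card_gt_0_iff by blast
    have "card C' < card C" using cardC' cpos by simp
    then obtain S where S: "S \<subseteq> C'" "independent_set V H S"
      "real (card C') - E2 H C' / 2 \<le> real (card S)"
      using less.IH[of C'] less.prems by (auto simp: C'_def)
    have vC': "v \<in> C'" using v uv by (simp add: C'_def)
    have finC': "finite C'" using finC by (simp add: C'_def)
    have e1: "E2 H C = E2 H C' + (\<Sum>x\<in>C'. adj H x u) + (\<Sum>y\<in>C. adj H u y)"
    proof -
      have "E2 H C = (\<Sum>y\<in>C. adj H u y) + (\<Sum>x\<in>C'. \<Sum>y\<in>C. adj H x y)"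
        unfolding E2_def C'_def using sum.remove[OF finC u] by simp
      also have "(\<Sum>x\<in>C'. \<Sum>y\<in>C. adj H x y) = (\<Sum>x\<in>C'. adj H x u + (\<Sum>y\<in>C'. adj H x y))"
        by (intro sum.cong refl) (simp add: sum.remove[OF finC u] C'_def)
      also have "\<dots> = (\<Sum>x\<in>C'. adj H x u) + E2 H C'"
        by (simp add: sum.distrib E2_def)
      finally show ?thesis by simp
    qed
    have a1: "adj H v u \<le> (\<Sum>x\<in>C'. adj H x u)"
      by (rule member_le_sum[OF vC' _ finC']) (simp add: adj_def)
    have a2: "adj H u v \<le> (\<Sum>y\<in>C. adj H u y)"
      by (rule member_le_sum[OF v _ finC]) (simp add: adj_def)
    have "adj H v u = 1" "adj H u v = 1" using huv hvu by (auto simp: adj_def)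
    then have "E2 H C' + 2 \<le> E2 H C" using e1 a1 a2 by linarith
    moreover have "real (card C) = real (card C') + 1" using cardC' cpos by simp
    ultimately have "real (card C) - E2 H C / 2 \<le> real (card S)" using S(3) by linarith
    then show ?thesis using S(1,2) by (auto simp: C'_def)
  qed
qed

lemma deg_count:
  assumes sg: "simple_graph V H" and reg: "regular V H 3" and CV: "C \<subseteq> V"
  shows "E2 H C = 6 * real (card C) - 3 * real (card V) + E2 H (V - C)"
proof -
  have finV: "finite V" using sg by (simp add: simple_graph_def)
  have finC: "finite C" using CV finV finite_subset by blast
  have symm: "\<And>x y. adj H x y = adj H y x" using sg by (auto simp: adj_def simple_graph_def)
  have row: "\<And>u. u \<in> V \<Longrightarrow> (\<Sum>v\<in>V. adj H u v) = 3"
    using reg finV by (simp add: sum_adj_card regular_def degree_def)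
  define cr where "cr A = (\<Sum>u\<in>A. \<Sum>v\<in>V - A. adj H u v)" for A
  have split: "\<And>A. A \<subseteq> V \<Longrightarrow> E2 H A + cr A = 3 * real (card A)"
  proof -
    fix A assume AV: "A \<subseteq> V"
    have "E2 H A + cr A = (\<Sum>u\<in>A. \<Sum>v\<in>V. adj H u v)"
      unfolding E2_def cr_def sum.distrib[symmetric]
      by (intro sum.cong refl) (metis AV finV sum.subset_diff add.commute)
    also have "\<dots> = (\<Sum>u\<in>A. 3)" using AV row by (intro sum.cong) auto
    finally show "E2 H A + cr A = 3 * real (card A)" by simp
  qed
  have "cr C = (\<Sum>v\<in>V - C. \<Sum>u\<in>C. adj H u v)" unfolding cr_def by (rule sum.swap)
  also have "\<dots> = cr (V - C)" unfolding cr_def using CV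
    by (simp add: double_diff symm)
  finally have crs: "cr C = cr (V - C)" .
  have "real (card (V - C)) = real (card V) - real (card C)"
    using CV finC finV by (simp add: card_Diff_subset card_mono of_nat_diff)
  then show ?thesis using split[OF CV] split[of "V - C"] crs by auto
qed

lemma compl_deg:
  assumes sg: "simple_graph V H" and reg: "regular V H 3" and v: "v \<in> V"
  shows "degree V (complement_graph V H) v = card V - 4"
proof -
  have finV: "finite V" using sg by (simp add: simple_graph_def)
  define N where "N = {u\<in>V. H v u}"
  have cN: "card N = 3" using reg v by (simp add: regular_def degree_def N_def)
  have vN: "v \<notin> N" using sg by (simp add: N_def simple_graph_def)
  have eq: "{u\<in>V. complement_graph V H v u} = V - insert v N"
    using v by (auto simp: complement_graph_def N_def)
  have sub: "insert v N \<subseteq> V" using v by (auto simp: N_def)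
  have fN: "finite N" using finV by (simp add: N_def)
  have "card (insert v N) = 4" using cN vN fN by simp
  then show ?thesis unfolding degree_def eq using card_Diff_subset[OF finite_subset[OF sub finV] sub]
    by simp
qed

lemma adj_compl:
  assumes sg: "simple_graph V H" and "u \<in> V" "v \<in> V"
  shows "adj (complement_graph V H) u v = 1 - adj H u v - (if u = v then 1 else 0)"
  using assms by (auto simp: adj_def complement_graph_def simple_graph_def)

lemma sum_compl:
  assumes sg: "simple_graph V H" and CV: "C \<subseteq> V"
  shows "(\<Sum>u\<in>C. \<Sum>v\<in>C. adj (complement_graph V H) u v) = real (card C) ^ 2 - real (card C) - E2 H C"
proof -
  have finV: "finite V" using sg by (simp add: simple_graph_def)
  have finC: "finite C" using CV finV finite_subset by blast
  have "(\<Sum>u\<in>C. \<Sum>v\<in>C. adj (complement_graph V H) u v)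
      = (\<Sum>u\<in>C. real (card C) - (\<Sum>v\<in>C. adj H u v) - 1)"
  proof (intro sum.cong refl)
    fix u assume u: "u \<in> C"
    have "(\<Sum>v\<in>C. adj (complement_graph V H) u v) = (\<Sum>v\<in>C. 1 - adj H u v - (if u = v then 1 else 0))"
      using CV u by (intro sum.cong refl adj_compl[OF sg]) auto
    also have "\<dots> = real (card C) - (\<Sum>v\<in>C. adj H u v) - 1"
      using u finC by (simp add: sum_subtractf)
    finally show "(\<Sum>v\<in>C. adj (complement_graph V H) u v) = real (card C) - (\<Sum>v\<in>C. adj H u v) - 1" .
  qed
  also have "\<dots> = real (card C) ^ 2 - real (card C) - E2 H C"
    by (simp add: sum_subtractf E2_def power2_eq_square)
  finally show ?thesis .
qed

lemma handshake:
  assumes sg: "simple_graph V H" and reg: "regular V H 3" and n4: "card V > 4"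
  shows "2 * real (num_edges V (complement_graph V H)) = real (card V) * (real (card V) - 4)"
proof -
  define G where "G = complement_graph V H"
  have finV: "finite V" using sg by (simp add: simple_graph_def)
  define Ed where "Ed = {{u, v} | u v. u \<in> V \<and> v \<in> V \<and> G u v}"
  define Pr where "Pr = (SIGMA u:V. {v\<in>V. G u v})"
  define fib where "fib e = {p\<in>Pr. {fst p, snd p} = e}" for e
  have cPr: "card Pr = card V * (card V - 4)"
  proof -
    have "card Pr = (\<Sum>u\<in>V. card {v\<in>V. G u v})" unfolding Pr_def using finV by simp
    also have "\<dots> = (\<Sum>u\<in>V. card V - 4)"
      using compl_deg[OF sg reg] by (intro sum.cong refl) (simp add: G_def degree_def)
    finally show ?thesis by simp
  qed
  have PrU: "Pr = (\<Union>e\<in>Ed. fib e)"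
    by (auto simp: Pr_def fib_def Ed_def G_def complement_graph_def) blast
  have finEd: "finite Ed"
  proof -
    have "Ed \<subseteq> Pow V" by (auto simp: Ed_def G_def complement_graph_def)
    then show ?thesis using finV finite_subset by blast
  qed
  have finPr: "finite Pr" unfolding Pr_def using finV by simp
  have fib2: "card (fib e) = 2" if eEd: "e \<in> Ed" for e
  proof -
    obtain u v where e: "e = {u, v}" "u \<in> V" "v \<in> V" "G u v" using eEd unfolding Ed_def by blast
    have uv: "u \<noteq> v" using e(4) by (simp add: G_def complement_graph_def)
    have Gs: "G v u" using e(2-4) sg by (auto simp: G_def complement_graph_def simple_graph_def)
    have "fib e = {(u, v), (v, u)}"
      using e uv Gs by (auto simp: fib_def Pr_def doubleton_eq_iff)
    then show ?thesis using uv by simp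
  qed
  have "card Pr = (\<Sum>e\<in>Ed. card (fib e))"
    unfolding PrU
    by (rule card_UN_disjoint[OF finEd]) (auto simp: fib_def finite_subset[OF _ finPr])
  also have "\<dots> = 2 * card Ed" using fib2 by simp
  finally have "2 * card Ed = card V * (card V - 4)" using cPr by simp
  then have "real (2 * card Ed) = real (card V * (card V - 4))" by simp
  then show ?thesis using n4 unfolding num_edges_def by (simp add: Ed_def G_def of_nat_diff)
qed

lemma arith_key:
  fixes k N E :: real
  assumes "0 \<le> k" "k \<le> N" "0 < N" "0 \<le> E" "2 * (k - (94/194) * N) \<le> E"
    "4 * k - N - 2 * (94/194) * N \<le> E" "6 * k - 3 * N \<le> E"
  shows "4 * k^2 \<le> 4 * (94/194) * N * k + N * E"
proof -
  define d :: real where "d = 94/194"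
  have NE: "N * E \<ge> 0" using assms by simp
  consider "k \<le> d * N" | "d * N \<le> k" "k \<le> N / 2" | "N/2 \<le> k" "k \<le> 4/5 * N" | "4/5 * N \<le> k"
    by linarith
  then show ?thesis
  proof cases
    case 1
    have "k * (d * N - k) \<ge> 0" using 1 assms by simp
    then show ?thesis using NE unfolding d_def by (simp add: algebra_simps power2_eq_square)
  next
    case 2
    have "(k - d * N) * (N/2 - k) \<ge> 0" using 2 by simp
    moreover have "(k - d * N) * (N/2 - k) = N * k / 2 + d * (N * k) - k * k - d * (N * N) / 2"
      by (simp add: field_simps)
    ultimately have h1: "d * (N * N) / 2 + k * k \<le> N * k / 2 + d * (N * k)" by linarith
    have "N * E \<ge> N * (2 * (k - d * N))" using assms by (intro mult_left_mono) (auto simp: d_def)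
    then have h2: "N * E \<ge> 2 * (N * k) - 2 * d * (N * N)" by (simp add: algebra_simps)
    have "4 * (k * k) \<le> 4 * d * (N * k) + N * E" using h1 h2 by linarith
    then show ?thesis unfolding d_def by (simp add: algebra_simps power2_eq_square)
  next
    case 3
    have "(k - N/2) * (N/2 + d * N - k) \<ge> 0" using 3 assms by (simp add: d_def)
    then have h1: "k * k \<le> N * k + d * (N * k) - N * N / 4 - d * (N * N) / 2"
      by (simp add: algebra_simps)
    have "N * E \<ge> N * (4 * k - N - 2 * d * N)" using assms by (intro mult_left_mono) (auto simp: d_def)
    then have h2: "N * E \<ge> 4 * (N * k) - N * N - 2 * d * (N * N)" by (simp add: algebra_simps)
    have "4 * (k * k) \<le> 4 * d * (N * k) + N * E" using h1 h2 by linarith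
    then show ?thesis unfolding d_def by (simp add: algebra_simps power2_eq_square)
  next
    case 4
    have "k * k \<le> N * k" using assms by (intro mult_right_mono) auto
    moreover have "N * k \<ge> N * (4/5 * N)" using 4 assms by (intro mult_left_mono) auto
    moreover have "N * E \<ge> N * (6 * k - 3 * N)" using assms by (intro mult_left_mono) auto
    ultimately have h: "k * k \<le> N * k" "4 * (N * N) \<le> 5 * (N * k)" "6 * (N * k) - 3 * (N * N) \<le> N * E"
      by (simp_all add: algebra_simps)
    have "0 \<le> N * k" using assms by simp
    then have "4 * (k * k) \<le> (188/97) * (N * k) + N * E" using h by linarith
    then show ?thesis by (simp add: algebra_simps power2_eq_square)
  qed
qed

lemma cluster_bound:
  assumes sg: "simple_graph V H" and reg: "regular V H 3" and n4: "card V > 4"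
    and ind: "\<forall>S. independent_set V H S \<longrightarrow> real (card S) \<le> (94 / 194) * real (card V)"
    and CV: "C \<subseteq> V"
  shows "cluster_modularity V (complement_graph V H) C
     \<le> (4 * (94 / 194) - 1) / (real (card V) - 4) * real (card C) / real (card V)"
proof -
  define G where "G = complement_graph V H"
  define N where "N = real (card V)"
  define k where "k = real (card C)"
  define E where "E = E2 H C"
  define T where "T = 2 * real (num_edges V G)"
  have finV: "finite V" using sg by (simp add: simple_graph_def)
  have N4: "N > 4" using n4 by (simp add: N_def)
  have T: "T = N * (N - 4)" using handshake[OF sg reg n4] by (simp add: T_def G_def N_def)
  have Tpos: "T > 0" using N4 T by simp
  have degG: "\<And>u. u \<in> V \<Longrightarrow> real (degree V G u) = N - 4"
    using compl_deg[OF sg reg] n4 by (simp add: G_def N_def of_nat_diff)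
  have kN: "k \<le> N" using CV finV by (simp add: k_def N_def card_mono)
  have k0: "0 \<le> k" by (simp add: k_def)
  have E0: "0 \<le> E" by (simp add: E_def E2_nonneg)
  have Eb: "2 * (k - (94/194) * N) \<le> E"
    using indep_exists[OF sg CV] ind by (force simp: k_def E_def N_def)
  have finC: "finite C" using CV finV finite_subset by blast
  have cardD: "real (card (V - C)) = N - k"
    using CV finC finV by (simp add: card_Diff_subset card_mono of_nat_diff k_def N_def)
  have ED: "2 * ((N - k) - (94/194) * N) \<le> E2 H (V - C)"
  proof -
    obtain S where S: "independent_set V H S" "real (card (V - C)) - E2 H (V - C) / 2 \<le> real (card S)"
      using indep_exists[OF sg, of "V - C"] by blast
    have "real (card S) \<le> (94/194) * N" using ind S(1) by (simp add: N_def)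
    then show ?thesis using S(2) cardD by (simp add: field_simps)
  qed
  have EDC: "E = 6 * k - 3 * N + E2 H (V - C)"
    using deg_count[OF sg reg CV] by (simp add: E_def k_def N_def)
  have Ec: "4 * k - N - 2 * (94/194) * N \<le> E" using ED EDC by (simp add: field_simps)
  have Ed: "6 * k - 3 * N \<le> E" using EDC E2_nonneg[of H "V - C"] by linarith
  have key: "4 * k^2 \<le> 4 * (94/194) * N * k + N * E"
    using arith_key[OF k0 kN _ E0 Eb Ec Ed] N4 by simp
  have "cluster_modularity V G C = (1 / T) * (\<Sum>u\<in>C. \<Sum>v\<in>C. adj G u v - (N - 4) * (N - 4) / T)"
    unfolding cluster_modularity_def Let_def T_def[symmetric]
    using degG subsetD[OF CV] by (intro arg_cong[where f="\<lambda>x. 1 / T * x"] sum.cong refl) auto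
  also have "\<dots> = (k^2 - k - E - k^2 * (N - 4) * (N - 4) / T) / T"
    using sum_compl[OF sg CV] by (simp add: sum_subtractf G_def k_def E_def power2_eq_square)
  also have "\<dots> = (k^2 - k - E - k^2 * (N - 4) / N) / T"
  proof -
    have "N \<noteq> 0" "N - 4 \<noteq> 0" using N4 by auto
    then have "k^2 * (N - 4) * (N - 4) / T = k^2 * (N - 4) / N" unfolding T by (simp add: field_simps)
    then show ?thesis by simp
  qed
  also have "\<dots> \<le> (4 * (94 / 194) - 1) / (N - 4) * k / N"
  proof -
    have "(k^2 - k - E - k^2 * (N - 4) / N) * N = 4 * k^2 - N * k - N * E"
      using N4 by (simp add: field_simps power2_eq_square)
    also have "\<dots> \<le> (4 * (94 / 194) - 1) * k * N" using key by (simp add: algebra_simps)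
    finally have "(k^2 - k - E - k^2 * (N - 4) / N) * N \<le> (4 * (94 / 194) - 1) * k * N" .
    then have "k^2 - k - E - k^2 * (N - 4) / N \<le> (4 * (94 / 194) - 1) * k" using N4 by simp
    then have "(k^2 - k - E - k^2 * (N - 4) / N) / T \<le> ((4 * (94 / 194) - 1) * k) / T"
      using Tpos by (intro divide_right_mono) auto
    also have "((4 * (94 / 194) - 1) * k) / T = (4 * (94 / 194) - 1) / (N - 4) * k / N"
      unfolding T by (simp add: field_simps)
    finally show ?thesis .
  qed
  finally show ?thesis by (simp add: G_def N_def k_def)
qed

theorem mainTheorem9:
  fixes V :: "'a set" and H :: "'a \<Rightarrow> 'a \<Rightarrow> bool"
  assumes "simple_graph V H"
    and "regular V H 3"
    and "card V > 4"
    and "\<forall>S. independent_set V H S \<longrightarrow> real (card S) \<le> (94 / 194) * real (card V)"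
  shows "OPT V (complement_graph V H) \<le> (4 * (94 / 194) - 1) / (real (card V) - 4)"
proof -
  note sg = assms(1) and reg = assms(2) and n4 = assms(3) and ind = assms(4)
  define G where "G = complement_graph V H"
  define c where "c = (4 * (94 / 194) - 1) / (real (card V) - 4)"
  have finV: "finite V" using sg by (simp add: simple_graph_def)
  have Vne: "V \<noteq> {}" using n4 by auto
  have Npos: "real (card V) > 0" using n4 by simp
  define Ms where "Ms = {modularity V G P | P. partition_on V P}"
  have Ms_img: "Ms = (\<lambda>P. modularity V G P) ` {P. partition_on V P}" by (auto simp: Ms_def)
  have "{P. partition_on V P} \<subseteq> Pow (Pow V)" by (auto simp: partition_on_def)
  then have "finite {P. partition_on V P}" using finV finite_subset by (metis finite_Pow_iff)
  then have finMs: "finite Ms" using Ms_img by simp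
  have "partition_on V {V}" using Vne by (simp add: partition_on_def disjoint_def)
  then have neMs: "Ms \<noteq> {}" by (auto simp: Ms_def)
  have bound: "x \<le> c" if "x \<in> Ms" for x
  proof -
    obtain P where P: "partition_on V P" "x = modularity V G P" using \<open>x \<in> Ms\<close> by (auto simp: Ms_def)
    have PV: "\<And>C. C \<in> P \<Longrightarrow> C \<subseteq> V" using P(1) by (auto simp: partition_on_def)
    have finP: "finite P" using P(1) finV by (metis Pow_iff finite_Pow_iff finite_subset subsetI PV)
    have cardU: "(\<Sum>C\<in>P. card C) = card V"
    proof -
      have "card (\<Union>P) = (\<Sum>C\<in>P. card C)"
        using P(1) PV finV by (intro card_Union_disjoint) (auto simp: partition_on_def intro: finite_subset)
      then show ?thesis using P(1) by (simp add: partition_on_def)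
    qed
    have "x = (\<Sum>C\<in>P. cluster_modularity V G C)" using P(2) by (simp add: modularity_def)
    also have "\<dots> \<le> (\<Sum>C\<in>P. c * real (card C) / real (card V))"
      using cluster_bound[OF sg reg n4 ind] PV by (intro sum_mono) (simp add: G_def c_def)
    also have "\<dots> = c * real (\<Sum>C\<in>P. card C) / real (card V)"
      by (simp add: sum_divide_distrib[symmetric] sum_distrib_left)
    also have "\<dots> = c" using cardU Npos by simp
    finally show ?thesis .
  qed
  have "OPT V G \<le> c" unfolding OPT_def Ms_def[symmetric]
    using finMs neMs bound by (simp add: Max_le_iff)
  then show ?thesis by (simp add: G_def c_def)
qed

end
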